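(* Under the standing assumptions of the context, for each fixed $l\ge l_0$ and any real $a<b$, $$\sup_{\omega\in[a,b]}\Big|S_l(\omega)-\Big(\prod_{j=1}^{n}m_l(\omega2^{-j})\Big)'\Big|\longrightarrow0\quad(n\to\infty),$$ where $S_l(\omega):=\sum_{j_0=1}^{\infty}2^{-j_0}m_l'(\omega2^{-j_0})\prod_{j\ge1,\,j\ne j_0}m_l(\omega2^{-j})$.
   Context: Let $\theta$ be odd, non-decreasing, $C^2$, with $\theta(\omega)=\pi/4$ for $\omega>\pi/3$; fix $\pi/3\le\omega_0<\pi/2$. Meyer scaling function (Fourier transform): $\widehat{\varphi^M}(\omega)=1$ for $|\omega|\le2\omega_0$, $=\cos(\frac\pi4+\theta(\frac{\pi}{3(\pi-2\omega_0)}(|\omega|-\pi)))$ for $2\omega_0<|\omega|\le2\pi-2\omega_0$, $=0$ otherwise. Meyer mask: $2\pi$-periodic $m^M$ with $m^M(\omega)=\widehat{\varphi^M}(2\omega)$ on $[-\pi,\pi]$. $\|\cdot\|_C$: sup norm on $[-\pi,\pi]$. A linear method of summation $(\lambda_{n,k})$ maps $f$ with Fourier coefficients $a_k,b_k$ to $u_n(f,\omega)=\frac{a_0}2+\sum_{k=1}^n\lambda_{n,k}(a_k\cos k\omega+b_k\sin k\omega)$. $m^M_l:=m^M/(\cos\frac\omega2)^{2l}$. Standing assumptions: a method and a sequence $n(l)$ are fixed with $u_l:=u_{n(l)}(m^M_l,\cdot)$, $u_{1,l}:=u_{n(l)}((m^M_l)',\cdot)$ satisfying $\|u_l-m^M_l\|_C=o(l^{-1})$,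 $\|u_{1,l}-(m^M_l)'\|_C=o(1)$, $u_l(\pi)\ne0$; $l_0$ is fixed with $\inf_{l\ge l_0}|u_l(0)|>0$. $m_l(\omega):=(\cos\frac\omega2)^{2l}u_l(\omega)/u_l(0)$ (a trigonometric polynomial with $m_l(0)=1$). *)

theory Defs
  imports "HOL-Analysis.Analysis"
begin

definition C2 :: "(real \<Rightarrow> real) \<Rightarrow> bool" where
  "C2 f \<longleftrightarrow> (\<exists>f' f''. (\<forall>x. (f has_real_derivative f' x) (at x)) \<and>
                       (\<forall>x. (f' has_real_derivative f'' x) (at x)) \<and> continuous_on UNIV f'')"

text \<open>Fourier transform of the Meyer scaling function.\<close>
definition phiM :: "(real \<Rightarrow> real) \<Rightarrow> real \<Rightarrow> real \<Rightarrow> real" where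
  "phiM \<theta> \<omega>0 \<omega> =
     (if \<bar>\<omega>\<bar> \<le> 2 * \<omega>0 then 1
      else if \<bar>\<omega>\<bar> \<le> 2 * pi - 2 * \<omega>0 then
        cos (pi / 4 + \<theta> (pi / (3 * (pi - 2 * \<omega>0)) * (\<bar>\<omega>\<bar> - pi)))
      else 0)"

definition red2pi :: "real \<Rightarrow> real" where
  "red2pi \<omega> = \<omega> - 2 * pi * of_int \<lfloor>(\<omega> + pi) / (2 * pi)\<rfloor>"

text \<open>Meyer mask: 2 pi-periodic, equal to phiM(2 omega) on [-pi,pi]
  (at the endpoints both values are 0, so the choice [-pi,pi) is harmless).\<close>
definition mM :: "(real \<Rightarrow> real) \<Rightarrow> real \<Rightarrow> real \<Rightarrow> real" where
  "mM \<theta> \<omega>0 \<omega> = phiM \<theta> \<omega>0 (2 * red2pi \<omega>)"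

definition mMl :: "(real \<Rightarrow> real) \<Rightarrow> real \<Rightarrow> nat \<Rightarrow> real \<Rightarrow> real" where
  "mMl \<theta> \<omega>0 l \<omega> = mM \<theta> \<omega>0 \<omega> / (cos (\<omega> / 2)) ^ (2 * l)"

definition supC :: "(real \<Rightarrow> real) \<Rightarrow> real" where
  "supC f = (SUP \<omega>\<in>{-pi..pi}. \<bar>f \<omega>\<bar>)"

definition fa :: "(real \<Rightarrow> real) \<Rightarrow> nat \<Rightarrow> real" where
  "fa f k = integral {-pi..pi} (\<lambda>x. f x * cos (real k * x)) / pi"

definition fb :: "(real \<Rightarrow> real) \<Rightarrow> nat \<Rightarrow> real" where
  "fb f k = integral {-pi..pi} (\<lambda>x. f x * sin (real k * x)) / pi"

definition usum :: "(nat \<Rightarrow> nat \<Rightarrow> real) \<Rightarrow> nat \<Rightarrow> (real \<Rightarrow> real) \<Rightarrow> real \<Rightarrow> real" where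
  "usum lam n f \<omega> = fa f 0 / 2 +
     (\<Sum>k=1..n. lam n k * (fa f k * cos (real k * \<omega>) + fb f k * sin (real k * \<omega>)))"

definition ul :: "(real \<Rightarrow> real) \<Rightarrow> real \<Rightarrow> (nat \<Rightarrow> nat \<Rightarrow> real) \<Rightarrow> (nat \<Rightarrow> nat) \<Rightarrow> nat \<Rightarrow> real \<Rightarrow> real" where
  "ul \<theta> \<omega>0 lam nl l = usum lam (nl l) (mMl \<theta> \<omega>0 l)"

definition u1l :: "(real \<Rightarrow> real) \<Rightarrow> real \<Rightarrow> (nat \<Rightarrow> nat \<Rightarrow> real) \<Rightarrow> (nat \<Rightarrow> nat) \<Rightarrow> nat \<Rightarrow> real \<Rightarrow> real" where
  "u1l \<theta> \<omega>0 lam nl l = usum lam (nl l) (deriv (mMl \<theta> \<omega>0 l))"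

definition ml :: "(real \<Rightarrow> real) \<Rightarrow> real \<Rightarrow> (nat \<Rightarrow> nat \<Rightarrow> real) \<Rightarrow> (nat \<Rightarrow> nat) \<Rightarrow> nat \<Rightarrow> real \<Rightarrow> real" where
  "ml \<theta> \<omega>0 lam nl l \<omega> = (cos (\<omega> / 2)) ^ (2 * l) * ul \<theta> \<omega>0 lam nl l \<omega> / ul \<theta> \<omega>0 lam nl l 0"

text \<open>S_l(omega) = sum_{j0>=1} 2^{-j0} m_l'(omega 2^{-j0}) prod_{j>=1, j<>j0} m_l(omega 2^{-j});
  indices shifted by one (j = i+1).\<close>
definition Sl :: "(real \<Rightarrow> real) \<Rightarrow> real \<Rightarrow> (nat \<Rightarrow> nat \<Rightarrow> real) \<Rightarrow> (nat \<Rightarrow> nat) \<Rightarrow> nat \<Rightarrow> real \<Rightarrow> real" where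
  "Sl \<theta> \<omega>0 lam nl l \<omega> =
     (\<Sum>i0. (1 / 2 ^ (i0 + 1)) * deriv (ml \<theta> \<omega>0 lam nl l) (\<omega> / 2 ^ (i0 + 1)) *
            (\<Prod>i. if i = i0 then 1 else ml \<theta> \<omega>0 lam nl l (\<omega> / 2 ^ (i + 1))))"

end

theory Submission
  imports Defs
begin

lemma mvt_bound:
  fixes m m' :: "real \<Rightarrow> real"
  assumes d: "\<And>x. (m has_real_derivative m' x) (at x)"
    and K: "\<And>x. \<bar>x\<bar> \<le> R \<Longrightarrow> \<bar>m' x\<bar> \<le> K" and x: "\<bar>x\<bar> \<le> R"
  shows "\<bar>m x - m 0\<bar> \<le> K * \<bar>x\<bar>"
proof (cases "x = 0")
  case True then show ?thesis by simp
next
  case False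
  show ?thesis
  proof (cases "x > 0")
    case True
    obtain z where z: "0 < z" "z < x" "m x - m 0 = (x - 0) * m' z"
      using MVT2[OF True, of m m'] d by blast
    have "\<bar>m' z\<bar> \<le> K" using K[of z] z x by auto
    then show ?thesis using z True by (simp add: abs_mult mult.commute mult_right_mono)
  next
    case nT: False
    then have lt: "x < 0" using False by simp
    obtain z where z: "x < z" "z < 0" "m 0 - m x = (0 - x) * m' z"
      using MVT2[OF lt, of m m'] d by blast
    have "\<bar>m' z\<bar> \<le> K" using K[of z] z x by auto
    then have "\<bar>m 0 - m x\<bar> \<le> K * \<bar>x\<bar>" using z lt by (simp add: abs_mult mult.commute mult_right_mono)
    then show ?thesis by linarith
  qed
qed

lemma prod_bound:
  fixes h e :: "nat \<Rightarrow> real"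
  assumes "finite F" "\<And>i. i \<in> F \<Longrightarrow> \<bar>h i - 1\<bar> \<le> e i"
  shows "\<bar>\<Prod>i\<in>F. h i\<bar> \<le> (\<Prod>i\<in>F. 1 + e i) \<and> \<bar>(\<Prod>i\<in>F. h i) - 1\<bar> \<le> (\<Prod>i\<in>F. 1 + e i) - 1"
  using assms
proof (induction F rule: finite_induct)
  case empty then show ?case by simp
next
  case (insert j F)
  define P where "P = (\<Prod>i\<in>F. h i)"
  define Q where "Q = (\<Prod>i\<in>F. 1 + e i)"
  have IH: "\<bar>P\<bar> \<le> Q" "\<bar>P - 1\<bar> \<le> Q - 1" using insert by (auto simp: P_def Q_def)
  have hj: "\<bar>h j - 1\<bar> \<le> e j" using insert by auto
  have ej: "0 \<le> e j" using hj by linarith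
  have Q0: "0 \<le> Q" using IH by linarith
  have eq1: "h j * P - 1 = (h j - 1) * P + (P - 1)" by (simp add: algebra_simps)
  have "\<bar>(h j - 1) * P\<bar> \<le> e j * Q" unfolding abs_mult using hj IH(1) ej
    by (intro mult_mono) auto
  then have A: "\<bar>h j * P - 1\<bar> \<le> (1 + e j) * Q - 1" using eq1 IH(2) by (simp add: algebra_simps)
  have "\<bar>h j * P\<bar> \<le> (1 + e j) * Q" unfolding abs_mult using hj IH(1) Q0
    by (intro mult_mono) auto
  with A show ?case using insert.hyps by (simp add: P_def Q_def)
qed

lemma prod_exp_bound:
  fixes e :: "nat \<Rightarrow> real"
  assumes "finite F" "\<And>i. i \<in> F \<Longrightarrow> 0 \<le> e i"
  shows "(\<Prod>i\<in>F. 1 + e i) \<le> exp (\<Sum>i\<in>F. e i)"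
proof -
  have "(\<Prod>i\<in>F. 1 + e i) \<le> (\<Prod>i\<in>F. exp (e i))"
    by (intro prod_mono) (use assms in auto)
  also have "\<dots> = exp (\<Sum>i\<in>F. e i)" by (simp add: exp_sum assms(1))
  finally show ?thesis .
qed

lemma geom_sum:
  assumes "n \<le> N"
  shows "(\<Sum>i=n..<N. (1/2::real)^(i+1)) = (1/2)^n - (1/2)^N"
  using assms
proof (induction N rule: dec_induct)
  case base then show ?case by simp
next
  case (step N) then show ?case by (simp add: sum.atLeastLessThan_Suc)
qed

lemma geom_sums: "(\<lambda>k. C * (1/2::real)^(k+n+1)) sums (C * (1/2)^n)"
proof -
  have "(\<lambda>k. C * (1/2)^(n+1) * (1/2::real)^k) sums (C * (1/2)^(n+1) * (1 / (1 - 1/2)))"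
    by (intro sums_mult geometric_sums) simp
  then show "(\<lambda>k. C * (1/2::real)^(k+n+1)) sums (C * (1/2)^n)"
    by (simp add: power_add mult_ac)
qed

lemma abs_suminf_le:
  fixes f g :: "nat \<Rightarrow> real"
  assumes fg: "\<And>k. \<bar>f k\<bar> \<le> g k" and sg: "summable g"
  shows "summable f" "\<bar>suminf f\<bar> \<le> suminf g"
proof -
  have n: "norm (f k) \<le> g k" for k using fg[of k] by simp
  show sf: "summable f" by (rule summable_comparison_test'[OF sg n])
  have u: "f k \<le> g k" for k using fg[of k] by linarith
  have l: "- g k \<le> f k" for k using fg[of k] by linarith
  have A: "suminf f \<le> suminf g" by (rule suminf_le[OF u sf sg])
  have B: "suminf (\<lambda>k. - g k) \<le> suminf f" by (rule suminf_le[OF l summable_minus[OF sg] sf])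
  have C: "suminf (\<lambda>k. - g k) = - suminf g" by (rule suminf_minus[OF sg])
  show "\<bar>suminf f\<bar> \<le> suminf g" using A B C by linarith
qed
lemma fin_bound:
  fixes G :: "nat \<Rightarrow> nat \<Rightarrow> real" and m' :: "real \<Rightarrow> real"
  assumes K: "\<And>x. \<bar>x\<bar> \<le> R \<Longrightarrow> \<bar>m' x\<bar> \<le> K" and K0: "0 \<le> K"
  and xR: "\<And>i::nat. \<bar>\<omega> / 2^(i+1)\<bar> \<le> R"
  and Pd: "\<And>i0. \<bar>prodinf (G i0) - (\<Prod>i<n. G i0 i)\<bar> \<le> E * \<delta>"
  and \<delta>0: "0 \<le> \<delta>" and E_def: "E = exp c"
  and D_def: "D = (\<Sum>i<n. (1/2^(i+1)) * m' (\<omega>/2^(i+1)) * (\<Prod>k<n. G i k))"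
  and t_def: "\<And>i0. t i0 = (1/2^(i0+1)) * m' (\<omega>/2^(i0+1)) * prodinf (G i0)"
  shows "\<bar>(\<Sum>i<n. t i) - D\<bar> \<le> K * E * \<delta>"
proof -
  have KEd: "0 \<le> K * E * \<delta>" using K0 \<delta>0 unfolding E_def by simp
  have "(\<Sum>i<n. t i) - D = (\<Sum>i<n. (1/2^(i+1)) * m' (\<omega>/2^(i+1)) * (prodinf (G i) - (\<Prod>k<n. G i k)))"
    unfolding D_def t_def sum_subtractf[symmetric] by (rule sum.cong) (simp_all add: diff_divide_distrib right_diff_distrib)
  also have "\<bar>\<dots>\<bar> \<le> (\<Sum>i<n. \<bar>(1/2^(i+1)) * m' (\<omega>/2^(i+1)) * (prodinf (G i) - (\<Prod>k<n. G i k))\<bar>)"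
    by (rule sum_abs)
  also have "\<dots> \<le> (\<Sum>i<n. (1/2)^(i+1) * (K * E * \<delta>))"
  proof (rule sum_mono)
    fix i
    define p where "p = prodinf (G i) - (\<Prod>k<n. G i k)"
    define y where "y = m' (\<omega>/2^(i+1))"
    have a1: "\<bar>y\<bar> \<le> K" unfolding y_def by (rule K[OF xR[of i]])
    have a2: "\<bar>p\<bar> \<le> E * \<delta>" unfolding p_def by (rule Pd)
    have a3: "\<bar>y * p\<bar> \<le> K * (E * \<delta>)" unfolding abs_mult
      using a1 a2 K0 by (intro mult_mono) auto
    have a4: "\<bar>1/2^(i+1) :: real\<bar> = (1/2)^(i+1)" by (simp add: power_one_over)
    have "\<bar>(1/2^(i+1)) * y * p\<bar> = (1/2)^(i+1) * \<bar>y * p\<bar>"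
      unfolding mult.assoc abs_mult[of "1/2^(i+1)"] a4 ..
    also have "\<dots> \<le> (1/2)^(i+1) * (K * (E * \<delta>))" using a3 by (intro mult_left_mono) auto
    finally show "\<bar>(1/2^(i+1)) * m' (\<omega>/2^(i+1)) * (prodinf (G i) - (\<Prod>k<n. G i k))\<bar> \<le> (1/2)^(i+1) * (K * E * \<delta>)"
      unfolding p_def y_def by (simp only: mult.assoc)
  qed
  also have "\<dots> = (\<Sum>i<n. (1/2::real)^(i+1)) * (K * E * \<delta>)"
    by (rule sum_distrib_right[symmetric])
  also have "(\<Sum>i<n. (1/2::real)^(i+1)) = 1 - (1/2)^n"
    using geom_sum[of 0 n] by (simp add: atLeast0LessThan)
  also have "(1 - (1/2::real)^n) * (K * E * \<delta>) \<le> 1 * (K * E * \<delta>)"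
    using KEd by (intro mult_right_mono) auto
  finally show ?thesis by simp
qed

lemma pointwise:
  fixes m m' :: "real \<Rightarrow> real"
  assumes d: "\<And>x. (m has_real_derivative m' x) (at x)" and m0: "m 0 = 1"
    and K: "\<And>x. \<bar>x\<bar> \<le> R \<Longrightarrow> \<bar>m' x\<bar> \<le> K" and K0: "0 \<le> K" and w: "\<bar>\<omega>\<bar> \<le> R"
  shows "\<bar>(\<Sum>i0. (1 / 2 ^ (i0 + 1)) * deriv m (\<omega> / 2 ^ (i0 + 1)) *
            (\<Prod>i. if i = i0 then 1 else m (\<omega> / 2 ^ (i + 1))))
          - deriv (\<lambda>x. \<Prod>j=1..n. m (x / 2 ^ j)) \<omega>\<bar>
         \<le> K * exp (K*R) * (1/2)^n + K * exp (K*R) * (exp (K*R*(1/2)^n) - 1)"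
proof -
  have R0: "0 \<le> R" using w by linarith
  define c where "c = K*R"
  have c0: "0 \<le> c" using K0 R0 by (simp add: c_def)
  define E where "E = exp c"
  define \<delta> where "\<delta> = exp (c*(1/2)^n) - 1"
  have \<delta>0: "0 \<le> \<delta>" using c0 by (simp add: \<delta>_def)
  define g where "g i = m (\<omega> / 2^(i+1))" for i :: nat
  define G where "G i0 i = (if i = i0 then 1 else g i)" for i0 i :: nat
  define e where "e i = c * (1/2)^(i+1)" for i :: nat
  have e0: "0 \<le> e i" for i using c0 by (simp add: e_def)
  have dm: "deriv m x = m' x" for x using DERIV_imp_deriv[OF d] .
  have xb: "\<bar>\<omega> / 2^(i+1)\<bar> \<le> R * (1/2)^(i+1)" for i :: nat
  proof -
    have "\<bar>\<omega> / 2^(i+1)\<bar> = \<bar>\<omega>\<bar> / 2^(i+1)" by simp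
    also have "\<dots> \<le> R / 2^(i+1)" using w by (intro divide_right_mono) auto
    finally show ?thesis by (simp add: power_one_over)
  qed
  have xR: "\<bar>\<omega> / 2^(i+1)\<bar> \<le> R" for i :: nat
  proof -
    have "R * (1/2)^(i+1) \<le> R * 1" using R0 by (intro mult_left_mono power_le_one) auto
    then show ?thesis using xb[of i] by linarith
  qed
  have ge: "\<bar>g i - 1\<bar> \<le> e i" for i
  proof -
    have "\<bar>g i - 1\<bar> \<le> K * \<bar>\<omega> / 2^(i+1)\<bar>"
      using mvt_bound[OF d K xR[of i]] m0 by (simp add: g_def)
    also have "\<dots> \<le> K * (R * (1/2)^(i+1))" using K0 xb by (intro mult_left_mono) auto
    finally show ?thesis by (simp add: e_def c_def mult_ac)
  qed
  have Ge: "\<bar>G i0 i - 1\<bar> \<le> e i" for i0 i using ge e0 by (simp add: G_def)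
  have esum: "(\<Sum>i\<in>{n'..<N}. e i) \<le> c * (1/2)^n'" for n' N
  proof (cases "n' \<le> N")
    case True
    have "(\<Sum>i\<in>{n'..<N}. e i) = c * ((1/2)^n' - (1/2)^N)"
      unfolding e_def sum_distrib_left[symmetric] geom_sum[OF True] ..
    also have "\<dots> \<le> c * (1/2)^n'" using c0 by (intro mult_left_mono) auto
    finally show ?thesis .
  next
    case False then show ?thesis using c0 by simp
  qed
  have Qb: "\<bar>\<Prod>i<N. G i0 i\<bar> \<le> E" for i0 N
  proof -
    have "\<bar>\<Prod>i<N. G i0 i\<bar> \<le> (\<Prod>i<N. 1 + e i)" using prod_bound[of "{..<N}" "G i0" e] Ge by auto
    also have "\<dots> \<le> exp (\<Sum>i<N. e i)" using e0 by (intro prod_exp_bound) auto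
    also have "\<dots> \<le> E" using esum[of 0 N] by (simp add: E_def atLeast0LessThan)
    finally show ?thesis .
  qed
  have Tb: "\<bar>(\<Prod>i\<in>{n..<N}. G i0 i) - 1\<bar> \<le> \<delta>" for i0 N
  proof -
    have "\<bar>(\<Prod>i\<in>{n..<N}. G i0 i) - 1\<bar> \<le> (\<Prod>i\<in>{n..<N}. 1 + e i) - 1"
      using prod_bound[of "{n..<N}" "G i0" e] Ge by auto
    also have "\<dots> \<le> exp (\<Sum>i\<in>{n..<N}. e i) - 1" using e0 by (simp add: prod_exp_bound)
    also have "\<dots> \<le> \<delta>" using esum[of n N] by (simp add: \<delta>_def)
    finally show ?thesis .
  qed
  have e_eq: "e = (\<lambda>i. c/2 * (1/2::real)^i)" by (auto simp: e_def)
  have elim: "e \<longlonglongrightarrow> 0"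
    unfolding e_eq by (intro tendsto_mult_right_zero LIMSEQ_power_zero) simp
  have esumm: "summable e"
    unfolding e_eq by (intro summable_mult summable_geometric) simp
  have conv: "convergent_prod (G i0)" for i0
  proof -
    obtain M where M: "\<And>i. i \<ge> M \<Longrightarrow> e i < 1"
      using order_tendstoD(2)[OF elim, of 1] unfolding eventually_sequentially by auto
    define z where "z k = G i0 (k + M) - 1" for k
    have "summable (\<lambda>k. e (k + M))" using esumm by (rule summable_ignore_initial_segment)
    then have "summable (\<lambda>k. \<bar>z k\<bar>)"
      by (rule summable_comparison_test[rotated]) (auto simp: z_def Ge)
    moreover have "z k \<noteq> -1" for k
    proof
      assume "z k = -1"
      then have "\<bar>G i0 (k+M) - 1\<bar> = 1" by (simp add: z_def)
      with Ge[of i0 "k+M"] M[of "k+M"] show False by simp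
    qed
    ultimately have "convergent_prod (\<lambda>k. 1 + z k)" by (rule summable_imp_convergent_prod_real)
    then have "convergent_prod (\<lambda>k. G i0 (k + M))" by (simp add: z_def)
    then show ?thesis by simp
  qed
  have lim: "(\<lambda>N. \<Prod>i<N. G i0 i) \<longlonglongrightarrow> prodinf (G i0)" for i0
  proof (rule LIMSEQ_imp_Suc)
    show "(\<lambda>N. \<Prod>i<Suc N. G i0 i) \<longlonglongrightarrow> prodinf (G i0)"
      using convergent_prod_LIMSEQ[OF conv[of i0]] by (simp add: lessThan_Suc_atMost)
  qed
  have Pb: "\<bar>prodinf (G i0)\<bar> \<le> E" for i0
    by (rule LIMSEQ_le_const2[OF tendsto_rabs[OF lim[of i0]]]) (use Qb in auto)
  have Pd: "\<bar>prodinf (G i0) - (\<Prod>i<n. G i0 i)\<bar> \<le> E * \<delta>" for i0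
  proof (rule LIMSEQ_le_const2[OF tendsto_rabs[OF tendsto_diff[OF lim[of i0] tendsto_const]]])
    show "\<exists>N. \<forall>N'\<ge>N. \<bar>(\<Prod>i<N'. G i0 i) - (\<Prod>i<n. G i0 i)\<bar> \<le> E * \<delta>"
    proof (intro exI allI impI)
      fix N assume N: "n \<le> N"
      have "(\<Prod>i<N. G i0 i) = (\<Prod>i<n. G i0 i) * (\<Prod>i\<in>{n..<N}. G i0 i)"
        using prod.atLeastLessThan_concat[of 0 n N "G i0"] N by (simp add: atLeast0LessThan)
      then have "(\<Prod>i<N. G i0 i) - (\<Prod>i<n. G i0 i) = (\<Prod>i<n. G i0 i) * ((\<Prod>i\<in>{n..<N}. G i0 i) - 1)"
        by (simp add: algebra_simps)
      then have "\<bar>(\<Prod>i<N. G i0 i) - (\<Prod>i<n. G i0 i)\<bar> = \<bar>\<Prod>i<n. G i0 i\<bar> * \<bar>(\<Prod>i\<in>{n..<N}. G i0 i) - 1\<bar>"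
        by (simp add: abs_mult)
      also have "\<dots> \<le> E * \<delta>" using Qb Tb \<delta>0 by (intro mult_mono) (auto simp: E_def)
      finally show "\<bar>(\<Prod>i<N. G i0 i) - (\<Prod>i<n. G i0 i)\<bar> \<le> E * \<delta>" .
    qed
  qed
  define t where "t i0 = (1/2^(i0+1)) * deriv m (\<omega>/2^(i0+1)) * prodinf (G i0)" for i0 :: nat
  have Seq: "(\<Sum>i0. (1 / 2 ^ (i0 + 1)) * deriv m (\<omega> / 2 ^ (i0 + 1)) *
            (\<Prod>i. if i = i0 then 1 else m (\<omega> / 2 ^ (i + 1)))) = suminf t"
    unfolding t_def G_def g_def ..
  have tb: "\<bar>t i0\<bar> \<le> K * E * (1/2)^(i0+1)" for i0
  proof -
    have "\<bar>t i0\<bar> = (1/2)^(i0+1) * \<bar>m' (\<omega>/2^(i0+1))\<bar> * \<bar>prodinf (G i0)\<bar>"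
      by (simp add: t_def dm abs_mult power_one_over)
    also have "\<dots> \<le> (1/2)^(i0+1) * K * E" using K[OF xR[of i0]] Pb[of i0] K0
      by (intro mult_mono) auto
    finally show ?thesis by (simp add: mult_ac)
  qed
  have st: "summable t"
    using abs_suminf_le(1)[of t "\<lambda>k. K * E * (1/2)^(k+0+1)"] tb sums_summable[OF geom_sums] by simp
  have tail: "\<bar>\<Sum>k. t (k + n)\<bar> \<le> K * E * (1/2)^n"
    using abs_suminf_le(2)[of "\<lambda>k. t (k+n)" "\<lambda>k. K * E * (1/2)^(k+n+1)"] tb
      sums_summable[OF geom_sums] sums_unique[OF geom_sums, symmetric] by simp
  define D where "D = (\<Sum>i<n. (1/2^(i+1)) * m' (\<omega>/2^(i+1)) * (\<Prod>k<n. G i k))"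
  have fun_eq: "(\<lambda>x. \<Prod>j=1..n. m (x / 2 ^ j)) = (\<lambda>x. \<Prod>i<n. m (x / 2 ^ Suc i))"
  proof (rule ext)
    fix x
    show "(\<Prod>j=1..n. m (x / 2 ^ j)) = (\<Prod>i<n. m (x / 2 ^ Suc i))"
      using prod.atLeast1_atMost_eq[of "\<lambda>j. m (x / 2 ^ j)" n] by (simp only: One_nat_def)
  qed
  have HD: "((\<lambda>x. \<Prod>i\<in>{..<n}. m (x / 2 ^ Suc i)) has_real_derivative
        (\<Sum>i\<in>{..<n}. (m' (\<omega> / 2 ^ Suc i) * (1 / 2 ^ Suc i)) * (\<Prod>y\<in>{..<n}-{i}. m (\<omega> / 2 ^ Suc y)))) (at \<omega>)"
  proof (rule has_field_derivative_prod)
    fix i :: nat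
    show "((\<lambda>u. m (u / 2 ^ Suc i)) has_field_derivative m' (\<omega> / 2 ^ Suc i) * (1 / 2 ^ Suc i)) (at \<omega>)"
      by (rule DERIV_chain2[OF d]) (auto intro!: derivative_eq_intros)
  qed
  have Deq: "(\<Sum>i\<in>{..<n}. (m' (\<omega> / 2 ^ Suc i) * (1 / 2 ^ Suc i)) * (\<Prod>y\<in>{..<n}-{i}. m (\<omega> / 2 ^ Suc y))) = D"
    unfolding D_def
  proof (rule sum.cong[OF refl])
    fix i assume i: "i \<in> {..<n}"
    have "(\<Prod>k<n. G i k) = G i i * (\<Prod>k\<in>{..<n}-{i}. G i k)" using i by (intro prod.remove) auto
    also have "\<dots> = (\<Prod>y\<in>{..<n}-{i}. m (\<omega> / 2 ^ Suc y))"
      by (auto simp: G_def g_def intro!: prod.cong)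
    finally show "(m' (\<omega> / 2 ^ Suc i) * (1 / 2 ^ Suc i)) * (\<Prod>y\<in>{..<n}-{i}. m (\<omega> / 2 ^ Suc y)) =
        (1/2^(i+1)) * m' (\<omega>/2^(i+1)) * (\<Prod>k<n. G i k)" by simp
  qed
  have derD: "deriv (\<lambda>x. \<Prod>j=1..n. m (x / 2 ^ j)) \<omega> = D"
    unfolding fun_eq using DERIV_imp_deriv[OF HD] Deq by simp
  have t_def': "t i0 = (1/2^(i0+1)) * m' (\<omega>/2^(i0+1)) * prodinf (G i0)" for i0
    unfolding t_def dm by (rule refl)
  have fin: "\<bar>(\<Sum>i<n. t i) - D\<bar> \<le> K * E * \<delta>"
    by (rule fin_bound[where G=G and m'=m' and R=R and K=K and \<omega>=\<omega> and n=n and E=E and \<delta>=\<delta>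
          and c=c and D=D and t=t, OF K K0 xR Pd \<delta>0 E_def D_def t_def'])
  have "suminf t - D = (\<Sum>k. t (k + n)) + ((\<Sum>i<n. t i) - D)"
    using suminf_split_initial_segment[OF st, of n] by simp
  then have "\<bar>suminf t - D\<bar> \<le> K * E * (1/2)^n + K * E * \<delta>"
    using tail fin by linarith
  then show ?thesis unfolding Seq derD by (simp add: E_def \<delta>_def c_def)
qed

lemma ml_deriv:
  fixes U U' :: "real \<Rightarrow> real"
  assumes "\<And>x. (U has_real_derivative U' x) (at x)" "c \<noteq> 0"
  shows "((\<lambda>x. cos (x/2)^(2*l) * U x / c) has_real_derivative
      ((real (2*l) * cos (x/2)^(2*l - 1) * (- sin (x/2) / 2)) * U x + cos (x/2)^(2*l) * U' x) / c) (at x)"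
  using assms(2) by (auto intro!: derivative_eq_intros assms(1) simp: field_simps)

lemma main_gen:
  fixes m m' :: "real \<Rightarrow> real" and a b :: real
  assumes d: "\<And>x. (m has_real_derivative m' x) (at x)" and cont: "continuous_on UNIV m'"
    and m0: "m 0 = 1" and ab: "a \<le> b"
  shows "(\<lambda>n. SUP \<omega>\<in>{a..b}. \<bar>(\<Sum>i0. (1 / 2 ^ (i0 + 1)) * deriv m (\<omega> / 2 ^ (i0 + 1)) *
            (\<Prod>i. if i = i0 then 1 else m (\<omega> / 2 ^ (i + 1))))
          - deriv (\<lambda>x. \<Prod>j=1..n. m (x / 2 ^ j)) \<omega>\<bar>) \<longlonglongrightarrow> 0"
proof -
  define R where "R = \<bar>a\<bar> + \<bar>b\<bar>"
  have "compact (m' ` {-R..R})"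
    by (intro compact_continuous_image continuous_on_subset[OF cont]) auto
  then have "bounded (m' ` {-R..R})" by (rule compact_imp_bounded)
  then obtain K where K0': "K > 0" and Kb: "\<forall>y\<in>m' ` {-R..R}. norm y \<le> K"
    unfolding bounded_pos by blast
  have K: "\<bar>m' x\<bar> \<le> K" if "\<bar>x\<bar> \<le> R" for x
  proof -
    have "x \<in> {-R..R}" using that by (auto simp: abs_le_iff)
    then show ?thesis using Kb by auto
  qed
  have K0: "0 \<le> K" using K0' by simp
  define F where "F n \<omega> = \<bar>(\<Sum>i0. (1 / 2 ^ (i0 + 1)) * deriv m (\<omega> / 2 ^ (i0 + 1)) *
            (\<Prod>i. if i = i0 then 1 else m (\<omega> / 2 ^ (i + 1))))
          - deriv (\<lambda>x. \<Prod>j=1..n. m (x / 2 ^ j)) \<omega>\<bar>" for n :: nat and \<omega> :: real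
  define \<beta> where "\<beta> n = K * exp (K*R) * (1/2)^n + K * exp (K*R) * (exp (K*R*(1/2)^n) - 1)" for n :: nat
  have pw: "F n \<omega> \<le> \<beta> n" if "\<omega> \<in> {a..b}" for n \<omega>
  proof -
    have "\<bar>\<omega>\<bar> \<le> R" using that by (auto simp: R_def)
    from pointwise[OF d m0 K K0 this, of n] show ?thesis unfolding F_def \<beta>_def .
  qed
  have F0: "0 \<le> F n \<omega>" for n \<omega> unfolding F_def by simp
  have lim: "\<beta> \<longlonglongrightarrow> 0"
  proof -
    have h: "(\<lambda>n. (1/2::real)^n) \<longlonglongrightarrow> 0" by (rule LIMSEQ_power_zero) simp
    have "(\<lambda>n. K * exp (K*R) * (1/2)^n + K * exp (K*R) * (exp (K*R*(1/2)^n) - 1)) \<longlonglongrightarrow>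
          K * exp (K*R) * 0 + K * exp (K*R) * (exp (K*R*0) - 1)"
      by (intro tendsto_intros h)
    then show ?thesis unfolding \<beta>_def by simp
  qed
  have ne: "{a..b} \<noteq> {}" using ab by simp
  have bd: "(SUP \<omega>\<in>{a..b}. F n \<omega>) \<le> \<beta> n" for n
    by (rule cSUP_least[OF ne pw])
  have bdd: "bdd_above (F n ` {a..b})" for n
    by (rule bdd_aboveI2[of _ _ "\<beta> n"]) (rule pw)
  have ge0: "0 \<le> (SUP \<omega>\<in>{a..b}. F n \<omega>)" for n
    by (rule cSUP_upper2[OF bdd, of a]) (use ab F0 in auto)
  have "(\<lambda>n. SUP \<omega>\<in>{a..b}. F n \<omega>) \<longlonglongrightarrow> 0"
  proof (rule Lim_null_comparison[OF _ lim])
    show "\<forall>\<^sub>F n in sequentially. norm (SUP \<omega>\<in>{a..b}. F n \<omega>) \<le> \<beta> n"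
      using bd ge0 by (intro always_eventually allI) simp
  qed
  then show ?thesis unfolding F_def .
qed

theorem lemma11:
  fixes \<theta> :: "real \<Rightarrow> real" and \<omega>0 :: real
    and lam :: "nat \<Rightarrow> nat \<Rightarrow> real" and nl :: "nat \<Rightarrow> nat"
    and l0 l :: nat and a b :: real
  assumes odd: "\<forall>x. \<theta> (- x) = - \<theta> x"
    and mono: "mono \<theta>"
    and C2: "C2 \<theta>"
    and flat: "\<forall>x. x > pi / 3 \<longrightarrow> \<theta> x = pi / 4"
    and w0: "pi / 3 \<le> \<omega>0" "\<omega>0 < pi / 2"
    and approx0: "(\<lambda>l. real l * supC (\<lambda>\<omega>. ul \<theta> \<omega>0 lam nl l \<omega> - mMl \<theta> \<omega>0 l \<omega>))
                    \<longlonglongrightarrow> 0"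
    and approx1: "(\<lambda>l. supC (\<lambda>\<omega>. u1l \<theta> \<omega>0 lam nl l \<omega> - deriv (mMl \<theta> \<omega>0 l) \<omega>))
                    \<longlonglongrightarrow> 0"
    and upi: "\<forall>l. ul \<theta> \<omega>0 lam nl l pi \<noteq> 0"
    and u0: "\<exists>c>0. \<forall>l\<ge>l0. \<bar>ul \<theta> \<omega>0 lam nl l 0\<bar> \<ge> c"
    and l: "l \<ge> l0"
    and ab: "a < b"
  shows "(\<lambda>n. SUP \<omega>\<in>{a..b}. \<bar>Sl \<theta> \<omega>0 lam nl l \<omega>
              - deriv (\<lambda>x. \<Prod>j=1..n. ml \<theta> \<omega>0 lam nl l (x / 2 ^ j)) \<omega>\<bar>) \<longlonglongrightarrow> 0"
proof -
  define U where "U = ul \<theta> \<omega>0 lam nl l"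
  define N where "N = nl l"
  define f where "f = mMl \<theta> \<omega>0 l"
  have U0: "U 0 \<noteq> 0" using u0 l unfolding U_def by force
  have Ueq: "U = (\<lambda>x. fa f 0 / 2 +
     (\<Sum>k=1..N. lam N k * (fa f k * cos (real k * x) + fb f k * sin (real k * x))))"
    by (auto simp: U_def ul_def usum_def N_def f_def)
  define U' where "U' x = (\<Sum>k=1..N. lam N k * (fa f k * (- sin (real k * x) * real k)
       + fb f k * (cos (real k * x) * real k)))" for x
  have dU: "(U has_real_derivative U' x) (at x)" for x
    unfolding Ueq U'_def by (auto intro!: derivative_eq_intros simp: algebra_simps)
  have cU: "continuous_on UNIV U"
    by (rule continuous_at_imp_continuous_on) (use dU DERIV_isCont in blast)
  have cU': "continuous_on UNIV U'"
    unfolding U'_def by (intro continuous_intros)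
  define m' where "m' x = ((real (2*l) * cos (x/2)^(2*l - 1) * (- sin (x/2) / 2)) * U x
      + cos (x/2)^(2*l) * U' x) / U 0" for x
  have mleq: "ml \<theta> \<omega>0 lam nl l = (\<lambda>x. cos (x/2)^(2*l) * U x / U 0)"
    by (auto simp: ml_def U_def)
  have d: "(ml \<theta> \<omega>0 lam nl l has_real_derivative m' x) (at x)" for x
    unfolding mleq m'_def by (rule ml_deriv[OF dU U0])
  have cont: "continuous_on UNIV m'"
    unfolding m'_def by (intro continuous_intros cU cU') (auto simp: U0)
  have m0: "ml \<theta> \<omega>0 lam nl l 0 = 1" unfolding mleq using U0 by simp
  show ?thesis unfolding Sl_def
    by (rule main_gen[OF d cont m0]) (use ab in simp)
qed

end
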